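(* Let $n\ge4$ and let $T_n$ be the transition semigroup of a minimal DFA with $n$ states recognizing a left ideal, with $|T_n|=n^{n-1}+n-1$. Then the minimal number of generators of the semigroup $T_n$ is $5$.
   Context: A left ideal is a nonempty $L\subseteq\Sigma^*$ with $L=\Sigma^*L$. The transition semigroup of a DFA is the set of transformations of its states induced by nonempty words, a semigroup under composition. The number $n^{n-1}+n-1$ is the maximal possible size of such a transition semigroup. *)

theory Defs
  imports "HOL-Library.FuncSet"
begin

definition dfa :: "nat \<Rightarrow> 'a set \<Rightarrow> (nat \<Rightarrow> 'a \<Rightarrow> nat) \<Rightarrow> nat \<Rightarrow> nat set \<Rightarrow> bool" where
  "dfa n Sig delta q0 F \<longleftrightarrow> finite Sig \<and> 0 < n \<and> q0 < n \<and> F \<subseteq> {..<n} \<and>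
     (\<forall>q<n. \<forall>a\<in>Sig. delta q a < n)"

definition delta_star :: "(nat \<Rightarrow> 'a \<Rightarrow> nat) \<Rightarrow> nat \<Rightarrow> 'a list \<Rightarrow> nat" where
  "delta_star delta q w = foldl delta q w"

definition dfa_lang :: "'a set \<Rightarrow> (nat \<Rightarrow> 'a \<Rightarrow> nat) \<Rightarrow> nat \<Rightarrow> nat set \<Rightarrow> 'a list set" where
  "dfa_lang Sig delta q0 F = {w \<in> lists Sig. delta_star delta q0 w \<in> F}"

definition minimal_dfa :: "nat \<Rightarrow> 'a set \<Rightarrow> (nat \<Rightarrow> 'a \<Rightarrow> nat) \<Rightarrow> nat \<Rightarrow> nat set \<Rightarrow> bool" where
  "minimal_dfa n Sig delta q0 F \<longleftrightarrow> dfa n Sig delta q0 F \<and>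
     (\<forall>q<n. \<exists>w\<in>lists Sig. delta_star delta q0 w = q) \<and>
     (\<forall>p<n. \<forall>q<n. p \<noteq> q \<longrightarrow>
        (\<exists>w\<in>lists Sig. (delta_star delta p w \<in> F) \<noteq> (delta_star delta q w \<in> F)))"

definition left_ideal :: "'a set \<Rightarrow> 'a list set \<Rightarrow> bool" where
  "left_ideal Sig L \<longleftrightarrow> L \<noteq> {} \<and> L = {u @ v | u v. u \<in> lists Sig \<and> v \<in> L}"

definition trans_sg :: "nat \<Rightarrow> 'a set \<Rightarrow> (nat \<Rightarrow> 'a \<Rightarrow> nat) \<Rightarrow> (nat \<Rightarrow> nat) set" where
  "trans_sg n Sig delta =
     {restrict (\<lambda>q. delta_star delta q w) {..<n} | w. w \<in> lists Sig \<and> w \<noteq> []}"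

inductive_set sg_gen :: "'b set \<Rightarrow> ('b \<Rightarrow> 'b) set \<Rightarrow> ('b \<Rightarrow> 'b) set"
  for S :: "'b set" and G :: "('b \<Rightarrow> 'b) set" where
  base: "g \<in> G \<Longrightarrow> g \<in> sg_gen S G"
| step: "f \<in> sg_gen S G \<Longrightarrow> g \<in> sg_gen S G \<Longrightarrow> compose S f g \<in> sg_gen S G"

definition sg_rank :: "'b set \<Rightarrow> ('b \<Rightarrow> 'b) set \<Rightarrow> nat" where
  "sg_rank S T = (LEAST k. \<exists>G. G \<subseteq> T \<and> finite G \<and> card G = k \<and> sg_gen S G = T)"

end

theory Submission
  imports Defs Complex_Main "HOL-Library.FuncSet" "HOL-Combinatorics.Permutations"
begin


lemma binom3_real:
  fixes x :: real assumes "x \<ge> 0"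
  shows "(1+x)^j \<ge> 1 + real j*x + real j*(real j-1)/2*x^2"
proof (induction j)
  case 0 then show ?case by simp
next
  case (Suc j)
  define A where "A = real j"
  have IH: "(1+x)^j \<ge> 1 + A*x + A*(A-1)/2*x^2" using Suc A_def by simp
  have "(1+x)^Suc j = (1+x)*(1+x)^j" by simp
  also have "\<dots> \<ge> (1+x)*(1 + A*x + A*(A-1)/2*x^2)"
    using IH assms by (intro mult_left_mono) auto
  finally have h: "(1+x)^Suc j \<ge> (1+x)*(1 + A*x + A*(A-1)/2*x^2)" .
  have e: "(1+x)*(1 + A*x + A*(A-1)/2*x^2) = 1 + (A+1)*x + (A+1)*A/2*x^2 + A*(A-1)/2*x^3"
    by (simp add: field_simps power2_eq_square power3_eq_cube)
  have "A*(A-1)/2*x^3 \<ge> 0" using assms A_def by (cases j) auto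
  hence "(1+x)^Suc j \<ge> 1 + (A+1)*x + (A+1)*A/2*x^2" using h e by linarith
  thus ?case using A_def by (simp add: add.commute)
qed

lemma pow_double:
  fixes m :: nat assumes "m \<ge> 9"
  shows "2 * m^(m-2) \<le> (m+1)^(m-2)"
proof -
  define j where "j = m - 2"
  have mj: "real m = real j + 2" using assms j_def by auto
  have m0: "real m > 0" using assms by auto
  have "(1 + 1/real m)^j \<ge> 1 + real j*(1/m) + real j*(real j-1)/2*(1/m)^2"
    by (rule binom3_real) simp
  moreover have "1 + real j*(1/real m) + real j*(real j-1)/2*(1/real m)^2 \<ge> 2"
  proof -
    have key: "real m^2 \<le> real j * real m + real j * (real j - 1)/2"
    proof -
      have j7: "real j \<ge> 7" using assms mj by simp
      have "real j * (real j - 5) \<ge> 7 * 2" by (rule mult_mono) (use j7 in auto)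
      hence "(real j)^2 - 5 * real j - 8 \<ge> 0" by (simp add: power2_eq_square algebra_simps)
      thus ?thesis using mj by (simp add: power2_eq_square algebra_simps)
    qed
    have "2 = (real m^2 + real m^2) / real m^2" using m0 by simp
    also have "\<dots> \<le> (real m^2 + real j * real m + real j * (real j - 1)/2)/ real m^2"
      using key m0 by (intro divide_right_mono) auto
    also have "\<dots> = 1 + real j*(1/real m) + real j*(real j-1)/2*(1/real m)^2"
      using m0 by (simp add: field_simps power2_eq_square)
    finally show ?thesis .
  qed
  ultimately have "(1 + 1/real m)^j \<ge> 2" by linarith
  hence "real m ^ j * (1 + 1/real m)^j \<ge> real m ^ j * 2"
    using m0 by (intro mult_left_mono) auto
  moreover have "real m ^ j * (1 + 1/real m)^j = (real m + 1)^j"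
    using m0 by (simp add: power_mult_distrib[symmetric] field_simps)
  ultimately have "(real m + 1)^j \<ge> 2 * real m ^ j" by simp
  hence "(1 + real m)^j \<ge> 2 * real m ^ j" by (simp add: add.commute)
  hence "real ((m+1)^j) \<ge> real (2 * m^j)" by simp
  thus ?thesis unfolding j_def by linarith
qed

lemma pow_k_double:
  fixes k :: nat assumes "k \<ge> 1"
  shows "2 * k^k \<le> (k+1)^k"
proof -
  have "(1 + 1/real k)^k \<ge> 1 + real k*(1/k) + real k*(real k-1)/2*(1/k)^2"
    by (rule binom3_real) simp
  moreover have "real k*(real k-1)/2*(1/real k)^2 \<ge> 0" using assms by simp
  moreover have "real k*(1/real k) = 1" using assms by simp
  ultimately have "(1 + 1/real k)^k \<ge> 2" by linarith
  hence "real k ^ k * (1 + 1/real k)^k \<ge> real k ^ k * 2"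
    by (intro mult_left_mono) auto
  moreover have "real k ^ k * (1 + 1/real k)^k = (real k + 1)^k"
    using assms by (simp add: power_mult_distrib[symmetric] field_simps)
  ultimately have "(real k + 1)^k \<ge> 2 * real k ^ k" by simp
  hence "real ((k+1)^k) \<ge> real (2 * k^k)" by (simp add: add.commute)
  thus ?thesis by linarith
qed

lemma ratio_step:
  fixes k m :: nat assumes "k \<ge> 1" "k + 1 \<le> m"
  shows "2*((k+1)*k^(m-1)) \<le> (k+2)*(k+1)^(m-1)"
proof -
  have d: "m - 1 = k + (m-1-k)" using assms by simp
  have a1: "k^(m-1) = k^k * k^(m-1-k)" by (subst d) (rule power_add)
  have a2: "(k+1)^(m-1) = (k+1)^k * (k+1)^(m-1-k)" by (subst d) (rule power_add)
  have b: "k^(m-1-k) \<le> (k+1)^(m-1-k)" by (simp add: power_mono)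
  have "2*k^(m-1) = (2*k^k) * k^(m-1-k)" using a1 by simp
  also have "\<dots> \<le> (k+1)^k * (k+1)^(m-1-k)"
    by (rule mult_mono[OF pow_k_double[OF assms(1)] b]) auto
  finally have "2*k^(m-1) \<le> (k+1)^(m-1)" using a2 by simp
  hence "(k+1)*(2*k^(m-1)) \<le> (k+2)*(k+1)^(m-1)"
    by (intro mult_mono) auto
  thus ?thesis by simp
qed

lemma geo_sum:
  fixes m j :: nat assumes "1 \<le> j" "j \<le> m"
  shows "(\<Sum>k\<in>{1..j}. (k+1)*k^(m-1)) \<le> 2*((j+1)*j^(m-1))"
  using assms
proof (induction j)
  case 0 then show ?case by simp
next
  case (Suc j)
  show ?case
  proof (cases "j = 0")
    case True then show ?thesis by simp
  next
    case False
    have "(\<Sum>k\<in>{1..Suc j}. (k+1)*k^(m-1)) = (\<Sum>k\<in>{1..j}. (k+1)*k^(m-1)) + (j+2)*(j+1)^(m-1)"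
      by simp
    also have "\<dots> \<le> 2*((j+1)*j^(m-1)) + (j+2)*(j+1)^(m-1)"
      using Suc False by simp
    also have "\<dots> \<le> 2*((j+2)*(j+1)^(m-1))"
      using ratio_step[of j m] False Suc by simp
    finally show ?thesis by simp
  qed
qed

lemma numeric_main:
  fixes n :: nat assumes "n \<ge> 4"
  shows "(n+1)*n^(n-2) + (\<Sum>k\<in>{1..n-1}. (k+1)*k^(n-2)) < 2*(n^(n-1) + (n-1))"
proof (cases "n \<ge> 10")
  case True
  define m where "m = n - 1"
  have nm: "n = m + 1" using assms m_def by simp
  have m9: "m \<ge> 9" using True m_def by simp
  have s: "(\<Sum>k\<in>{1..m}. (k+1)*k^(m-1)) \<le> 2*((m+1)*m^(m-1))"
    using geo_sum[of m m] m9 by simp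
  have d1: "m - 1 = Suc (m-2)" using m9 by simp
  have e1: "m^(m-1) = m * m^(m-2)" by (simp only: d1 power_Suc)
  have e2: "(m+1)^(m-1) = (m+1) * (m+1)^(m-2)" by (simp only: d1 power_Suc)
  have "2*((m+1)*m^(m-1)) = (m+1)*m*(2*m^(m-2))" unfolding e1 by (simp only: ac_simps)
  also have "\<dots> \<le> (m+1)*m*((m+1)^(m-2))" using pow_double[OF m9] by simp
  also have "\<dots> = m*(m+1)^(m-1)" unfolding e2 by (simp only: ac_simps)
  finally have s2: "(\<Sum>k\<in>{1..m}. (k+1)*k^(m-1)) \<le> m*(m+1)^(m-1)" using s by linarith
  have d2: "m = Suc (m-1)" using m9 by simp
  have e3: "(m+1)^m = (m+1)*(m+1)^(m-1)" by (subst d2) (simp only: power_Suc diff_Suc_1)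
  have "(m+2)*(m+1)^(m-1) + m*(m+1)^(m-1) = 2*(m+1)^m"
    using e3 by (simp add: algebra_simps)
  hence "(m+2)*(m+1)^(m-1) + (\<Sum>k\<in>{1..m}. (k+1)*k^(m-1)) < 2*((m+1)^m + m)"
  proof -
    define X where "X = (m+1)^(m-1)"
    define Y where "Y = (m+1)^m"
    define S where "S = (\<Sum>k\<in>{1..m}. (k+1)*k^(m-1))"
    have "(m+2)*X + m*X = 2*Y" "S \<le> m*X" using \<open>(m+2)*(m+1)^(m-1) + m*(m+1)^(m-1) = 2*(m+1)^m\<close> s2
      unfolding X_def Y_def S_def by auto
    hence "(m+2)*X + S < 2*(Y + m)" using m9 unfolding distrib_right distrib_left by linarith
    thus ?thesis unfolding X_def Y_def S_def .
  qed
  moreover have "n - 2 = m - 1" "n - 1 = m" using nm by auto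
  ultimately show ?thesis using nm by (simp add: add.commute)
next
  case False
  hence "n = 4 \<or> n = 5 \<or> n = 6 \<or> n = 7 \<or> n = 8 \<or> n = 9" using assms by auto
  moreover have "{1..4-1::nat} = {1,2,3}" "{1..5-1::nat} = {1,2,3,4}" "{1..6-1::nat} = {1,2,3,4,5}"
    "{1..7-1::nat} = {1,2,3,4,5,6}" "{1..8-1::nat} = {1,2,3,4,5,6,7}" "{1..9-1::nat} = {1,2,3,4,5,6,7,8}"
    by auto
  ultimately show ?thesis by (elim disjE) simp_all
qed


lemma rearr:
  fixes U :: "'b set" and c :: "nat \<Rightarrow> nat" and le :: "'b \<Rightarrow> 'b \<Rightarrow> bool"
  assumes "finite U" "mono c" "\<forall>x\<in>U. le x x"
    "\<forall>x\<in>U. \<forall>y\<in>U. le x y \<and> le y x \<longrightarrow> x = y"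
    "\<forall>x\<in>U. \<forall>y\<in>U. \<forall>w\<in>U. le x y \<and> le y w \<longrightarrow> le x w"
  shows "(\<Sum>s\<in>U. c (card {p\<in>U. le s p})) \<le> (\<Sum>k\<in>{1..card U}. c k)"
  using assms
proof (induction "card U" arbitrary: U)
  case 0
  from 0(1,2) have "U = {}" by simp
  then show ?case by simp
next
  case (Suc N)
  have ne: "U \<noteq> {}" using Suc(2) by auto
  define f where "f = (\<lambda>s. card {p\<in>U. le s p})"
  obtain s0 where s0: "s0 \<in> U" "\<forall>s\<in>U. f s \<le> f s0"
  proof -
    have fin: "finite (f ` U)" using Suc(3) by simp
    have "Max (f ` U) \<in> f ` U" using fin ne by (intro Max_in) auto
    then obtain s0 where "s0 \<in> U" "f s0 = Max (f ` U)" by auto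
    moreover have "\<forall>s\<in>U. f s \<le> Max (f ` U)" using fin by auto
    ultimately show ?thesis using that by auto
  qed
  have minl: "\<forall>p\<in>U. le p s0 \<longrightarrow> p = s0"
  proof (intro ballI impI, rule ccontr)
    fix p assume p: "p \<in> U" "le p s0" "p \<noteq> s0"
    have sub: "{x\<in>U. le s0 x} \<subseteq> {x\<in>U. le p x}"
    proof
      fix x assume x: "x \<in> {x\<in>U. le s0 x}"
      have xU: "x \<in> U" using x by simp
      have "le s0 x" using x by simp
      hence "le p x" using Suc(7)[rule_format, OF p(1) s0(1) xU] p(2) by simp
      thus "x \<in> {x\<in>U. le p x}" using xU by simp
    qed
    have "le p p" using Suc(5)[rule_format, OF p(1)] .
    hence i1: "p \<in> {x\<in>U. le p x}" using p(1) by simp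
    have "\<not> le s0 p" using Suc(6)[rule_format, OF p(1) s0(1)] p(2) p(3) by blast
    hence i2: "p \<notin> {x\<in>U. le s0 x}" by simp
    have ps: "{x\<in>U. le s0 x} \<subset> {x\<in>U. le p x}" using sub i1 i2 by blast
    have fin: "finite {x\<in>U. le p x}" using Suc(3) by simp
    have "f s0 < f p" unfolding f_def by (rule psubset_card_mono[OF fin ps])
    thus False using s0(2) p(1) by (simp add: not_less[symmetric])
  qed
  define U' where "U' = U - {s0}"
  have finU': "finite U'" using Suc(3) U'_def by simp
  have "card U' = card U - 1" using s0(1) Suc(3) by (simp add: U'_def)
  hence cU': "N = card U'" using Suc(2) by simp
  have eqs: "\<forall>s\<in>U'. {p\<in>U. le s p} = {p\<in>U'. le s p}"
  proof
    fix s assume s: "s \<in> U'"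
    have "\<not> le s s0" using minl s U'_def by blast
    thus "{p\<in>U. le s p} = {p\<in>U'. le s p}" using U'_def by blast
  qed
  have r': "\<forall>x\<in>U'. le x x" using Suc(5) U'_def by blast
  have a': "\<forall>x\<in>U'. \<forall>y\<in>U'. le x y \<and> le y x \<longrightarrow> x = y" using Suc(6) U'_def by blast
  have t': "\<forall>x\<in>U'. \<forall>y\<in>U'. \<forall>w\<in>U'. le x y \<and> le y w \<longrightarrow> le x w" using Suc(7) U'_def by blast
  have IH: "(\<Sum>s\<in>U'. c (card {p\<in>U'. le s p})) \<le> (\<Sum>k\<in>{1..card U'}. c k)"
    by (rule Suc(1)[OF cU' finU' Suc(4) r' a' t'])
  hence IH: "(\<Sum>s\<in>U'. c (card {p\<in>U'. le s p})) \<le> (\<Sum>k\<in>{1..N}. c k)" using cU' by simp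
  have "(\<Sum>s\<in>U. c (card {p\<in>U. le s p})) = c (f s0) + (\<Sum>s\<in>U'. c (card {p\<in>U. le s p}))"
    unfolding U'_def f_def using Suc(3) s0 by (simp add: sum.remove)
  also have "\<dots> = c (f s0) + (\<Sum>s\<in>U'. c (card {p\<in>U'. le s p}))"
    using eqs by simp
  also have "\<dots> \<le> c (Suc N) + (\<Sum>k\<in>{1..N}. c k)"
  proof (rule add_mono[OF _ IH])
    have "f s0 \<le> card U" unfolding f_def using Suc(3) by (intro card_mono) auto
    thus "c (f s0) \<le> c (Suc N)" using Suc(2) Suc(4) by (simp add: monoD)
  qed
  also have "\<dots> = (\<Sum>k\<in>{1..Suc N}. c k)" by simp
  finally show ?case using Suc(2) by simp
qed


lemma pairs_bound:
  fixes A :: "'b set" and le :: "'b \<Rightarrow> 'b \<Rightarrow> bool"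
  assumes fin: "finite A" and as: "\<forall>x\<in>A. \<forall>y\<in>A. le x y \<and> le y x \<longrightarrow> x = y"
  shows "2 * card {(x,y)\<in>A\<times>A. le x y} \<le> card A * (card A + 1)"
proof -
  define D where "D = {(x,y)\<in>A\<times>A. x = y}"
  define S where "S = {(x,y)\<in>A\<times>A. le x y \<and> x \<noteq> y}"
  define S' where "S' = {(x,y)\<in>A\<times>A. le y x \<and> x \<noteq> y}"
  have finAA: "finite (A\<times>A)" using fin by simp
  have cD: "card D = card A"
  proof -
    have "D = (\<lambda>x. (x,x)) ` A" unfolding D_def by auto
    moreover have "inj_on (\<lambda>x. (x,x)) A" by (auto simp: inj_on_def)
    ultimately show ?thesis by (simp add: card_image)
  qed
  have cS': "card S' = card S"
  proof -
    have "S' = (\<lambda>(x,y). (y,x)) ` S" unfolding S_def S'_def by auto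
    moreover have "inj_on (\<lambda>(x,y). (y,x)) S" by (auto simp: inj_on_def)
    ultimately show ?thesis by (simp add: card_image)
  qed
  have disj: "S \<inter> S' = {}" using as unfolding S_def S'_def by auto
  have sub: "S \<union> S' \<subseteq> A\<times>A - D" unfolding S_def S'_def D_def by auto
  have u1: "card (S \<union> S') = card S + card S'"
    using disj finAA by (intro card_Un_disjoint) (auto simp: S_def S'_def intro: finite_subset)
  have u2: "card (S \<union> S') \<le> card (A\<times>A - D)" using sub finAA by (intro card_mono) auto
  have u3: "card (A\<times>A - D) = card A * card A - card A"
  proof -
    have "D \<subseteq> A\<times>A" unfolding D_def by auto
    hence "finite D" using finAA by (rule finite_subset)
    thus ?thesis using cD \<open>D \<subseteq> A\<times>A\<close> by (simp add: card_Diff_subset card_cartesian_product)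
  qed
  have h1: "2 * card S \<le> card A * card A - card A" using cS' u1 u2 u3 by simp
  have "{(x,y)\<in>A\<times>A. le x y} \<subseteq> D \<union> S" unfolding D_def S_def by auto
  hence "card {(x,y)\<in>A\<times>A. le x y} \<le> card (D \<union> S)" using finAA
    by (intro card_mono) (auto simp: D_def S_def intro: finite_subset)
  also have "\<dots> \<le> card D + card S" by (rule card_Un_le)
  finally have "card {(x,y)\<in>A\<times>A. le x y} \<le> card A + card S" using cD by simp
  hence "2 * card {(x,y)\<in>A\<times>A. le x y} \<le> 2 * card A + (card A * card A - card A)" using h1 by linarith
  also have "\<dots> = card A * (card A + 1)" by (simp add: algebra_simps)
  finally show ?thesis .
qed

lemma fun_count:
  fixes U :: "'a set" and A :: "'b set" and le :: "'b \<Rightarrow> 'b \<Rightarrow> bool"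
  assumes "finite U" "finite A" "q \<in> U" "r \<in> U" "q \<noteq> r"
  shows "card {g \<in> U \<rightarrow>\<^sub>E A. le (g q) (g r)} \<le> card {(x,y)\<in>A\<times>A. le x y} * card A ^ (card U - 2)"
proof -
  define P where "P = {(x,y)\<in>A\<times>A. le x y}"
  define W where "W = U - {q,r}"
  define h where "h = (\<lambda>g::'a\<Rightarrow>'b. ((g q, g r), restrict g W))"
  have "inj_on h {g \<in> U \<rightarrow>\<^sub>E A. le (g q) (g r)}"
  proof (rule inj_onI)
    fix g g' assume g: "g \<in> {g \<in> U \<rightarrow>\<^sub>E A. le (g q) (g r)}" and g': "g' \<in> {g \<in> U \<rightarrow>\<^sub>E A. le (g q) (g r)}"
      and e: "h g = h g'"
    show "g = g'"
    proof (rule extensionalityI[of _ U])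
      show "g \<in> extensional U" "g' \<in> extensional U" using g g' by (auto simp: PiE_def)
      fix x assume "x \<in> U"
      thus "g x = g' x" using e unfolding h_def W_def
        by (cases "x = q"; cases "x = r") (auto simp: restrict_def fun_eq_iff split: if_splits)
    qed
  qed
  moreover have "h ` {g \<in> U \<rightarrow>\<^sub>E A. le (g q) (g r)} \<subseteq> P \<times> (W \<rightarrow>\<^sub>E A)"
    unfolding h_def P_def W_def using assms by (auto simp: PiE_def Pi_def)
  moreover have "finite (P \<times> (W \<rightarrow>\<^sub>E A))"
    using assms unfolding P_def W_def by (auto intro!: finite_PiE finite_cartesian_product intro: finite_subset[of _ "A\<times>A"])
  ultimately have "card {g \<in> U \<rightarrow>\<^sub>E A. le (g q) (g r)} \<le> card (P \<times> (W \<rightarrow>\<^sub>E A))"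
    by (intro card_inj_on_le) auto
  also have "\<dots> = card P * card A ^ card W"
    using assms unfolding W_def by (simp add: card_cartesian_product card_funcsetE)
  also have "card W = card U - 2" using assms unfolding W_def by (simp add: card_Diff_subset)
  finally show ?thesis unfolding P_def .
qed


lemma mono_count:
  fixes Q :: "'b set" and le :: "'b \<Rightarrow> 'b \<Rightarrow> bool"
  assumes finQ: "finite Q" and cQ: "card Q = n" and n4: "n \<ge> 4" and zQ: "z \<in> Q"
    and rf: "\<forall>x\<in>Q. le x x"
    and an: "\<forall>x\<in>Q. \<forall>y\<in>Q. le x y \<and> le y x \<longrightarrow> x = y"
    and tr: "\<forall>x\<in>Q. \<forall>y\<in>Q. \<forall>w\<in>Q. le x y \<and> le y w \<longrightarrow> le x w"
    and bot: "\<forall>x\<in>Q. le z x"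
    and qQ: "q \<in> Q" and rQ: "r \<in> Q" and qz: "q \<noteq> z" and rz: "r \<noteq> z" and qr: "q \<noteq> r"
    and lqr: "le q r"
  shows "card {t \<in> Q \<rightarrow>\<^sub>E Q. \<forall>p\<in>Q. \<forall>p'\<in>Q. le p p' \<longrightarrow> le (t p) (t p')} < n^(n-1) + n - 1"
proof -
  define M where "M = {t \<in> Q \<rightarrow>\<^sub>E Q. \<forall>p\<in>Q. \<forall>p'\<in>Q. le p p' \<longrightarrow> le (t p) (t p')}"
  define Up where "Up = (\<lambda>s. {p\<in>Q. le s p})"
  define U where "U = Q - {z}"
  define c where "c = (\<lambda>k::nat. (k+1)*k^(n-2))"
  have finU: "finite U" using finQ U_def by simp
  have cU: "card U = n - 1" using cQ zQ finQ U_def by simp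
  have qU: "q \<in> U" and rU: "r \<in> U" using qQ rQ qz rz U_def by auto
  have finUp: "\<And>s. finite (Up s)" using finQ Up_def by simp
  have bnd: "2 * card {t\<in>M. t z = s} \<le> c (card (Up s))" if sQ: "s \<in> Q" for s
  proof -
    define G where "G = {g \<in> U \<rightarrow>\<^sub>E Up s. le (g q) (g r)}"
    have inj: "inj_on (\<lambda>t. restrict t U) {t\<in>M. t z = s}"
    proof (rule inj_onI)
      fix t t' assume t: "t \<in> {t\<in>M. t z = s}" and t': "t' \<in> {t\<in>M. t z = s}"
        and e: "restrict t U = restrict t' U"
      show "t = t'"
      proof (rule extensionalityI[of _ Q])
        show "t \<in> extensional Q" "t' \<in> extensional Q" using t t' by (auto simp: M_def PiE_def)
        fix x assume x: "x \<in> Q"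
        show "t x = t' x"
        proof (cases "x = z")
          case True thus ?thesis using t t' by simp
        next
          case False
          hence "x \<in> U" using x U_def by simp
          thus ?thesis using e by (metis restrict_apply')
        qed
      qed
    qed
    have img: "(\<lambda>t. restrict t U) ` {t\<in>M. t z = s} \<subseteq> G"
    proof
      fix g assume "g \<in> (\<lambda>t. restrict t U) ` {t\<in>M. t z = s}"
      then obtain t where t: "t \<in> M" "t z = s" and g: "g = restrict t U" by auto
      have tQ: "t \<in> Q \<rightarrow>\<^sub>E Q" and mon: "\<forall>p\<in>Q. \<forall>p'\<in>Q. le p p' \<longrightarrow> le (t p) (t p')"
        using t(1) M_def by auto
      have "\<forall>p\<in>U. t p \<in> Up s"
      proof
        fix p assume p: "p \<in> U"
        hence pQ: "p \<in> Q" using U_def by simp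
        have "le (t z) (t p)" using mon zQ pQ bot by blast
        moreover have "t p \<in> Q" using tQ pQ by auto
        ultimately show "t p \<in> Up s" using t(2) Up_def by simp
      qed
      moreover have "le (t q) (t r)" using mon qQ rQ lqr by blast
      ultimately show "g \<in> G" unfolding G_def g using qU rU by auto
    qed
    have finG: "finite G" unfolding G_def using finU finUp by (auto intro: finite_subset[OF _ finite_PiE])
    have "card {t\<in>M. t z = s} \<le> card G"
      using card_inj_on_le[OF inj img finG] .
    also have "\<dots> \<le> card {(x,y)\<in>Up s\<times>Up s. le x y} * card (Up s) ^ (card U - 2)"
      unfolding G_def by (rule fun_count[OF finU finUp qU rU qr])
    finally have h: "2 * card {t\<in>M. t z = s} \<le> 2 * card {(x,y)\<in>Up s\<times>Up s. le x y} * card (Up s) ^ (card U - 2)"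
      by simp
    have anUp: "\<forall>x\<in>Up s. \<forall>y\<in>Up s. le x y \<and> le y x \<longrightarrow> x = y" using an Up_def by auto
    have "2 * card {(x,y)\<in>Up s\<times>Up s. le x y} * card (Up s) ^ (card U - 2)
          \<le> card (Up s) * (card (Up s) + 1) * card (Up s) ^ (card U - 2)"
      by (intro mult_right_mono pairs_bound[OF finUp anUp]) simp
    also have "\<dots> = c (card (Up s))"
    proof -
      have "n - 2 = Suc (card U - 2)" using cU n4 by simp
      thus ?thesis unfolding c_def by (simp add: algebra_simps)
    qed
    finally show ?thesis using h by linarith
  qed
  have Meq: "M = (\<Union>s\<in>Q. {t\<in>M. t z = s})" using zQ by (auto simp: M_def PiE_def Pi_def)
  have "card M \<le> (\<Sum>s\<in>Q. card {t\<in>M. t z = s})"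
    by (subst Meq) (rule card_UN_le[OF finQ])
  hence "2 * card M \<le> (\<Sum>s\<in>Q. 2 * card {t\<in>M. t z = s})" by (simp add: sum_distrib_left[symmetric])
  also have "\<dots> \<le> (\<Sum>s\<in>Q. c (card (Up s)))" using bnd by (intro sum_mono) auto
  also have "\<dots> = c (card (Up z)) + (\<Sum>s\<in>U. c (card (Up s)))"
    unfolding U_def using finQ zQ by (simp add: sum.remove)
  also have "Up z = Q" using bot Up_def by auto
  also have "(\<Sum>s\<in>U. c (card (Up s))) = (\<Sum>s\<in>U. c (card {p\<in>U. le s p}))"
  proof (rule sum.cong)
    fix s assume s: "s \<in> U"
    have "\<not> le s z" using an bot s U_def zQ by auto
    hence "Up s = {p\<in>U. le s p}" using U_def Up_def by auto
    thus "c (card (Up s)) = c (card {p\<in>U. le s p})" by simp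
  qed simp
  also have "\<dots> \<le> (\<Sum>k\<in>{1..card U}. c k)"
  proof (rule rearr[OF finU])
    show "mono c" unfolding c_def
    proof (rule monoI)
      fix x y :: nat assume "x \<le> y"
      thus "(x+1)*x^(n-2) \<le> (y+1)*y^(n-2)" by (intro mult_mono power_mono) auto
    qed
    show "\<forall>x\<in>U. le x x" using rf U_def by auto
    show "\<forall>x\<in>U. \<forall>y\<in>U. le x y \<and> le y x \<longrightarrow> x = y" using an U_def by auto
    show "\<forall>x\<in>U. \<forall>y\<in>U. \<forall>w\<in>U. le x y \<and> le y w \<longrightarrow> le x w" using tr U_def by auto
  qed
  finally have "2 * card M \<le> c n + (\<Sum>k\<in>{1..n-1}. c k)" using cQ cU by simp
  also have "\<dots> < 2*(n^(n-1) + (n-1))" unfolding c_def by (rule numeric_main[OF n4])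
  finally show ?thesis unfolding M_def using n4 by simp
qed


lemma ds_append: "delta_star d q (u@v) = delta_star d (delta_star d q u) v"
  by (simp add: delta_star_def)

lemma ds_less:
  assumes "dfa n Sig delta q0 F" "p < n" "w \<in> lists Sig"
  shows "delta_star delta p w < n"
  using assms(2,3)
proof (induction w arbitrary: p)
  case Nil thus ?case by (simp add: delta_star_def)
next
  case (Cons a w)
  have "delta p a < n" using assms(1) Cons.prems unfolding dfa_def by auto
  moreover have "delta_star delta p (a#w) = delta_star delta (delta p a) w" by (simp add: delta_star_def)
  ultimately show ?case using Cons by auto
qed

lemma card_fix:
  fixes Q :: "'b set" assumes "finite Q" "z \<in> Q"
  shows "card {t \<in> Q \<rightarrow>\<^sub>E Q. t z = z} = card Q ^ (card Q - 1)"
proof -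
  define R where "R = Q - {z}"
  have "bij_betw (\<lambda>t. restrict t R) {t \<in> Q \<rightarrow>\<^sub>E Q. t z = z} (R \<rightarrow>\<^sub>E Q)"
  proof (rule bij_betwI[where g = "\<lambda>g. (\<lambda>x\<in>Q. if x = z then z else g x)"])
    show "(\<lambda>t. restrict t R) \<in> {t \<in> Q \<rightarrow>\<^sub>E Q. t z = z} \<rightarrow> R \<rightarrow>\<^sub>E Q"
      unfolding R_def by (auto simp: PiE_def Pi_def)
    show "(\<lambda>g. \<lambda>x\<in>Q. if x = z then z else g x) \<in> (R \<rightarrow>\<^sub>E Q) \<rightarrow> {t \<in> Q \<rightarrow>\<^sub>E Q. t z = z}"
      using assms(2) unfolding R_def by (auto simp: PiE_def Pi_def)
    show "(\<lambda>x\<in>Q. if x = z then z else restrict t R x) = t" if "t \<in> {t \<in> Q \<rightarrow>\<^sub>E Q. t z = z}" for t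
      using that unfolding R_def by (auto simp: PiE_def extensional_def fun_eq_iff)
    show "restrict (\<lambda>x\<in>Q. if x = z then z else g x) R = g" if "g \<in> R \<rightarrow>\<^sub>E Q" for g
      using that unfolding R_def by (auto simp: PiE_def extensional_def fun_eq_iff)
  qed
  hence "card {t \<in> Q \<rightarrow>\<^sub>E Q. t z = z} = card (R \<rightarrow>\<^sub>E Q)" by (rule bij_betw_same_card)
  also have "\<dots> = card Q ^ (card Q - 1)" using assms unfolding R_def by (simp add: card_funcsetE)
  finally show ?thesis .
qed

definition Tm :: "nat \<Rightarrow> nat \<Rightarrow> (nat \<Rightarrow> nat) set" where
  "Tm n z = {t \<in> {..<n} \<rightarrow>\<^sub>E {..<n}. t z = z} \<union> (\<lambda>c. restrict (\<lambda>_. c) {..<n}) ` ({..<n} - {z})"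

lemma card_Tm:
  assumes "z < n"
  shows "card (Tm n z) = n^(n-1) + n - 1"
proof -
  define A where "A = {t \<in> {..<n} \<rightarrow>\<^sub>E {..<n}. t z = z}"
  define B where "B = (\<lambda>c. restrict (\<lambda>_. c) {..<n}) ` ({..<n} - {z})"
  have cA: "card A = n^(n-1)" using card_fix[of "{..<n}" z] assms A_def by simp
  have injB: "inj_on (\<lambda>c. restrict (\<lambda>_::nat. c) {..<n}) ({..<n} - {z})"
  proof (rule inj_onI)
    fix c d assume "c \<in> {..<n} - {z}" "d \<in> {..<n} - {z}" "restrict (\<lambda>_::nat. c) {..<n} = restrict (\<lambda>_. d) {..<n}"
    hence "restrict (\<lambda>_::nat. c) {..<n} z = restrict (\<lambda>_. d) {..<n} z" by simp
    thus "c = d" using assms by simp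
  qed
  have cB: "card B = n - 1" unfolding B_def using card_image[OF injB] assms by simp
  have disj: "A \<inter> B = {}"
  proof (rule ccontr)
    assume "A \<inter> B \<noteq> {}"
    then obtain t where tA: "t \<in> A" and tB: "t \<in> B" by blast
    from tB obtain c where c: "c \<in> {..<n} - {z}" "t = restrict (\<lambda>_. c) {..<n}" unfolding B_def by blast
    have "t z = c" using c assms by simp
    moreover have "t z = z" using tA A_def by simp
    ultimately show False using c by simp
  qed
  have "A \<subseteq> {..<n} \<rightarrow>\<^sub>E {..<n}" unfolding A_def by blast
  hence finA: "finite A" by (rule finite_subset) (simp add: finite_PiE)
  have finB: "finite B" unfolding B_def by simp
  have "card (Tm n z) = card A + card B" unfolding Tm_def A_def[symmetric] B_def[symmetric]
    by (rule card_Un_disjoint[OF finA finB disj])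
  thus ?thesis using cA cB assms by simp
qed

lemma T_char:
  fixes n :: nat and Sig :: "'a set" and delta :: "nat \<Rightarrow> 'a \<Rightarrow> nat"
    and q0 :: nat and F :: "nat set"
  assumes n4: "n \<ge> 4"
    and md: "minimal_dfa n Sig delta q0 F"
    and li: "left_ideal Sig (dfa_lang Sig delta q0 F)"
    and cT: "card (trans_sg n Sig delta) = n ^ (n - 1) + n - 1"
  shows "trans_sg n Sig delta = Tm n q0"
proof -
  define Q where "Q = {..<n}"
  define T where "T = trans_sg n Sig delta"
  define Lg where "Lg = (\<lambda>p. {w \<in> lists Sig. delta_star delta p w \<in> F})"
  define le where "le = (\<lambda>p p'. Lg p \<subseteq> Lg p')"
  define M where "M = {t \<in> Q \<rightarrow>\<^sub>E Q. \<forall>p\<in>Q. \<forall>p'\<in>Q. le p p' \<longrightarrow> le (t p) (t p')}"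
  have dfa: "dfa n Sig delta q0 F" using md minimal_dfa_def by blast
  have z: "q0 < n" using dfa dfa_def by blast
  have zQ: "q0 \<in> Q" using z Q_def by simp
  have rf: "\<forall>x\<in>Q. le x x" unfolding le_def by simp
  have tr: "\<forall>x\<in>Q. \<forall>y\<in>Q. \<forall>w\<in>Q. le x y \<and> le y w \<longrightarrow> le x w" unfolding le_def by blast
  have an: "\<forall>x\<in>Q. \<forall>y\<in>Q. le x y \<and> le y x \<longrightarrow> x = y"
  proof (intro ballI impI)
    fix x y assume xy: "x \<in> Q" "y \<in> Q" "le x y \<and> le y x"
    hence eq: "Lg x = Lg y" unfolding le_def by blast
    show "x = y"
    proof (rule ccontr)
      assume "x \<noteq> y"
      then obtain w where "w \<in> lists Sig" "(delta_star delta x w \<in> F) \<noteq> (delta_star delta y w \<in> F)"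
        using md xy unfolding minimal_dfa_def Q_def by blast
      thus False using eq unfolding Lg_def by blast
    qed
  qed
  have bot: "\<forall>x\<in>Q. le q0 x"
  proof
    fix p assume "p \<in> Q"
    then obtain u where u: "u \<in> lists Sig" "delta_star delta q0 u = p"
      using md unfolding minimal_dfa_def Q_def by blast
    show "le q0 p" unfolding le_def
    proof
      fix v assume "v \<in> Lg q0"
      hence v: "v \<in> lists Sig" "delta_star delta q0 v \<in> F" unfolding Lg_def by auto
      hence "v \<in> dfa_lang Sig delta q0 F" unfolding dfa_lang_def by simp
      hence "u @ v \<in> dfa_lang Sig delta q0 F" using li u(1) unfolding left_ideal_def by blast
      hence "delta_star delta q0 (u@v) \<in> F" unfolding dfa_lang_def by simp
      thus "v \<in> Lg p" using v(1) u(2) unfolding Lg_def by (simp add: ds_append)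
    qed
  qed
  have TM: "T \<subseteq> M"
  proof
    fix t assume "t \<in> T"
    then obtain w where w: "w \<in> lists Sig" "t = restrict (\<lambda>q. delta_star delta q w) {..<n}"
      unfolding T_def trans_sg_def by blast
    have "t \<in> Q \<rightarrow>\<^sub>E Q" using w ds_less[OF dfa] unfolding Q_def by auto
    moreover have "le (t p) (t p')" if "p \<in> Q" "p' \<in> Q" "le p p'" for p p'
    proof -
      have "Lg (delta_star delta p w) \<subseteq> Lg (delta_star delta p' w)"
      proof
        fix v assume "v \<in> Lg (delta_star delta p w)"
        hence v: "v \<in> lists Sig" "delta_star delta p (w@v) \<in> F" unfolding Lg_def by (auto simp: ds_append)
        hence "w@v \<in> Lg p" using w(1) unfolding Lg_def by simp
        hence "w@v \<in> Lg p'" using that unfolding le_def by blast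
        thus "v \<in> Lg (delta_star delta p' w)" using v(1) unfolding Lg_def by (simp add: ds_append)
      qed
      moreover have "t p = delta_star delta p w" "t p' = delta_star delta p' w" using that(1,2) w(2) Q_def by auto
      ultimately show ?thesis unfolding le_def by simp
    qed
    ultimately show "t \<in> M" unfolding M_def by blast
  qed
  have "M \<subseteq> Q \<rightarrow>\<^sub>E Q" unfolding M_def by blast
  hence finM: "finite M" by (rule finite_subset) (simp add: finite_PiE Q_def)
  have anti: "\<not> le q r" if "q \<in> Q" "r \<in> Q" "q \<noteq> q0" "r \<noteq> q0" "q \<noteq> r" for q r
  proof
    assume lqr: "le q r"
    have fQ: "finite Q" "card Q = n" unfolding Q_def by auto
    have "card M < n^(n-1) + n - 1" unfolding M_def
      by (rule mono_count[OF fQ n4 zQ rf an tr bot that lqr])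
    moreover have "card T \<le> card M" using TM finM by (rule card_mono[rotated])
    ultimately show False using cT T_def by simp
  qed
  have sub: "T \<subseteq> Tm n q0"
  proof
    fix t assume tT: "t \<in> T"
    hence tM: "t \<in> M" using TM by blast
    hence tQ: "t \<in> Q \<rightarrow>\<^sub>E Q" and mon: "\<forall>p\<in>Q. \<forall>p'\<in>Q. le p p' \<longrightarrow> le (t p) (t p')" unfolding M_def by auto
    show "t \<in> Tm n q0"
    proof (cases "t q0 = q0")
      case True thus ?thesis using tQ unfolding Tm_def Q_def by simp
    next
      case False
      have tzQ: "t q0 \<in> Q" using tQ zQ by auto
      have "t p = t q0" if pQ: "p \<in> Q" for p
      proof (rule ccontr)
        assume ne: "t p \<noteq> t q0"
        have tpQ: "t p \<in> Q" using tQ pQ by auto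
        have l1: "le (t q0) (t p)" using mon zQ pQ bot by blast
        show False
        proof (cases "t p = q0")
          case True
          hence "le (t q0) q0" using l1 by simp
          moreover have "le q0 (t q0)" using bot tzQ by blast
          ultimately show False using an zQ tzQ False by blast
        next
          case False2: False
          show False using anti[OF tzQ tpQ False False2] ne l1 by simp
        qed
      qed
      hence "t = restrict (\<lambda>_. t q0) Q" using tQ by (auto simp: PiE_def extensional_def fun_eq_iff)
      moreover have "t q0 \<in> {..<n} - {q0}" using tzQ False Q_def by simp
      ultimately show ?thesis unfolding Tm_def Q_def by blast
    qed
  qed
  have finTm: "finite (Tm n q0)" unfolding Tm_def by (auto intro: finite_subset[OF _ finite_PiE[of "{..<n}" "\<lambda>_. {..<n}"]])
  have "card T = card (Tm n q0)" using cT card_Tm[OF z] T_def by simp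
  thus ?thesis using card_subset_eq[OF finTm sub] T_def by simp
qed


definition bt :: "nat \<Rightarrow> nat \<Rightarrow> nat" where "bt z i = (if i < z then i else Suc i)"

lemma bt_ne: "bt z i \<noteq> z" by (simp add: bt_def)
lemma bt_inj: "bt z i = bt z j \<longleftrightarrow> i = j" by (auto simp: bt_def)
lemma bt_lt: "i < n - 1 \<Longrightarrow> z < n \<Longrightarrow> bt z i < n" by (auto simp: bt_def)

locale tmctx = fixes n z :: nat assumes n4: "n \<ge> 4" and zn: "z < n"
begin

abbreviation "Q \<equiv> {..<n}"

lemma Tm_Pi: "f \<in> Tm n z \<Longrightarrow> f \<in> Q \<rightarrow>\<^sub>E Q"
  unfolding Tm_def using zn by (auto simp: PiE_def Pi_def)

lemma Tm_const: "f \<in> Tm n z \<Longrightarrow> f z \<noteq> z \<Longrightarrow> f = restrict (\<lambda>_. f z) Q \<and> f z \<in> Q - {z}"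
  unfolding Tm_def using zn by auto

lemma Tm_compose: assumes f: "f \<in> Tm n z" and g: "g \<in> Tm n z" shows "compose Q f g \<in> Tm n z"
proof -
  have fP: "f \<in> Q \<rightarrow>\<^sub>E Q" and gP: "g \<in> Q \<rightarrow>\<^sub>E Q" using Tm_Pi f g by auto
  have cP: "compose Q f g \<in> Q \<rightarrow>\<^sub>E Q" using fP gP by (auto simp: compose_def PiE_def Pi_def)
  show ?thesis
  proof (cases "compose Q f g z = z")
    case True thus ?thesis using cP unfolding Tm_def by blast
  next
    case False
    have cz: "compose Q f g z = f (g z)" using zn by (simp add: compose_eq)
    have const: "compose Q f g x = compose Q f g z" if "x \<in> Q" for x
    proof (cases "g z = z")
      case True
      hence fz: "f z \<noteq> z" using False cz by simp
      have "f = restrict (\<lambda>_. f z) Q" using Tm_const[OF f fz] by blast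
      hence "f (g x) = f z" using gP that by (metis PiE_mem restrict_apply')
      thus ?thesis using that cz True by (simp add: compose_eq)
    next
      case False
      have "g = restrict (\<lambda>_. g z) Q" using Tm_const[OF g False] by blast
      hence "g x = g z" using that by (metis restrict_apply')
      thus ?thesis using that cz by (simp add: compose_eq)
    qed
    have "compose Q f g = restrict (\<lambda>_. compose Q f g z) Q"
    proof (rule extensionalityI[of _ Q])
      show "compose Q f g \<in> extensional Q" by (simp add: compose_def)
      show "restrict (\<lambda>_. compose Q f g z) Q \<in> extensional Q" by simp
      fix x assume "x \<in> Q" thus "compose Q f g x = restrict (\<lambda>_. compose Q f g z) Q x" using const by simp
    qed
    moreover have "compose Q f g z \<in> Q - {z}" using cP zn False by auto
    ultimately show ?thesis unfolding Tm_def by blast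
  qed
qed

lemma sg_Tm: assumes "G \<subseteq> Tm n z" "x \<in> sg_gen Q G" shows "x \<in> Tm n z"
  using assms(2) by (induction rule: sg_gen.induct) (use assms(1) Tm_compose in auto)

lemma bij_factors:
  assumes f: "f \<in> Q \<rightarrow> Q" and g: "g \<in> Q \<rightarrow> Q" and b: "bij_betw (compose Q f g) Q Q"
  shows "bij_betw f Q Q" "bij_betw g Q Q"
proof -
  have icomp: "inj_on (compose Q f g) Q" using b bij_betw_def by blast
  have ig: "inj_on g Q"
  proof (rule inj_onI)
    fix x y assume xy: "x \<in> Q" "y \<in> Q" "g x = g y"
    hence "compose Q f g x = compose Q f g y" by (simp add: compose_eq)
    thus "x = y" using icomp xy(1,2) by (meson inj_onD)
  qed
  have gQ: "g ` Q \<subseteq> Q" using g by blast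
  have cg: "card (g ` Q) = card Q" using ig by (rule card_image)
  have gQ2: "g ` Q = Q" using card_subset_eq[OF _ gQ cg] by simp
  thus bg: "bij_betw g Q Q" using ig by (simp add: bij_betw_def)
  have ci: "compose Q f g ` Q = Q" using b by (simp add: bij_betw_def)
  have "f ` (g ` Q) = compose Q f g ` Q"
  proof -
    have "\<And>x. x \<in> Q \<Longrightarrow> compose Q f g x = f (g x)" by (simp add: compose_eq)
    hence "compose Q f g ` Q = (\<lambda>x. f (g x)) ` Q" by (rule image_cong[OF refl])
    thus ?thesis by (simp add: image_image)
  qed
  hence fQ: "f ` Q = Q" using gQ2 ci by simp
  have "inj_on f Q" by (rule eq_card_imp_inj_on) (simp_all add: fQ)
  thus "bij_betw f Q Q" using fQ by (simp add: bij_betw_def)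
qed

lemma perm_gen:
  assumes G: "G \<subseteq> Tm n z" and x: "x \<in> sg_gen Q G" and b: "bij_betw x Q Q"
  shows "x \<in> sg_gen Q {g\<in>G. bij_betw g Q Q}"
  using x b
proof (induction rule: sg_gen.induct)
  case (base g) thus ?case by (auto intro: sg_gen.base)
next
  case (step f g)
  have "f \<in> Q \<rightarrow> Q" "g \<in> Q \<rightarrow> Q" using sg_Tm[OF G step.hyps(1)] sg_Tm[OF G step.hyps(2)] Tm_Pi by auto
  hence "bij_betw f Q Q" "bij_betw g Q Q" using bij_factors step.prems by auto
  thus ?case using step.IH by (auto intro: sg_gen.step)
qed

lemma sg_Pi: assumes "G \<subseteq> Q \<rightarrow> Q" "x \<in> sg_gen Q G" shows "x \<in> Q \<rightarrow> Q"
  using assms(2) by (induction rule: sg_gen.induct) (use assms(1) in \<open>auto simp: compose_def Pi_def\<close>)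

lemma sg_single_comm:
  assumes p: "p \<in> Q \<rightarrow> Q" and x: "x \<in> sg_gen Q {p}" and y: "y \<in> sg_gen Q {p}"
  shows "compose Q x y = compose Q y x"
proof -
  have P: "\<And>w. w \<in> sg_gen Q {p} \<Longrightarrow> w \<in> Q \<rightarrow> Q" using sg_Pi p by blast
  have c1: "compose Q w p = compose Q p w" if "w \<in> sg_gen Q {p}" for w
    using that
  proof (induction rule: sg_gen.induct)
    case (base g) thus ?case by simp
  next
    case (step f g)
    have "compose Q (compose Q f g) p = compose Q f (compose Q g p)"
      using compose_assoc[OF p] by metis
    also have "\<dots> = compose Q f (compose Q p g)" using step.IH(2) by simp
    also have "\<dots> = compose Q (compose Q f p) g" using compose_assoc[OF P[OF step.hyps(2)]] by metis
    also have "\<dots> = compose Q (compose Q p f) g" using step.IH(1) by simp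
    also have "\<dots> = compose Q p (compose Q f g)" using compose_assoc[OF P[OF step.hyps(2)]] by metis
    finally show ?case .
  qed
  show ?thesis using x
  proof (induction rule: sg_gen.induct)
    case (base g) thus ?case using c1[OF y] by simp
  next
    case (step f g)
    have "compose Q (compose Q f g) y = compose Q f (compose Q g y)"
      using compose_assoc[OF P[OF y]] by metis
    also have "\<dots> = compose Q f (compose Q y g)" using step.IH(2) by simp
    also have "\<dots> = compose Q (compose Q f y) g" using compose_assoc[OF P[OF step.hyps(2)]] by metis
    also have "\<dots> = compose Q (compose Q y f) g" using step.IH(1) by simp
    also have "\<dots> = compose Q y (compose Q f g)" using compose_assoc[OF P[OF step.hyps(2)]] by metis
    finally show ?case .
  qed
qed


lemma sg_empty: "sg_gen Q {} = {}"
proof -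
  have "x \<in> sg_gen Q {} \<Longrightarrow> False" for x
    by (induction rule: sg_gen.induct) auto
  thus ?thesis by blast
qed

lemma K3_gen:
  assumes G: "G \<subseteq> Tm n z" and x: "x \<in> sg_gen Q G"
    and p: "x z = z" "x ` (Q - {z}) \<subseteq> Q - {z}" "\<not> inj_on x Q"
  shows "\<exists>g\<in>G. g z = z \<and> g ` (Q - {z}) \<subseteq> Q - {z} \<and> \<not> inj_on g Q"
  using x p
proof (induction rule: sg_gen.induct)
  case (base g) thus ?case by blast
next
  case (step f g)
  have fT: "f \<in> Tm n z" and gT: "g \<in> Tm n z" using sg_Tm[OF G] step.hyps by auto
  have fP: "f \<in> Q \<rightarrow>\<^sub>E Q" and gP: "g \<in> Q \<rightarrow>\<^sub>E Q" using Tm_Pi fT gT by auto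
  have ce: "\<And>y. y \<in> Q \<Longrightarrow> compose Q f g y = f (g y)" by (simp add: compose_eq)
  have zQ: "z \<in> Q" using zn by simp
  have xz: "f (g z) = z" using step.prems(1) ce[OF zQ] by simp
  define u where "u = bt z 0"
  have uU: "u \<in> Q - {z}" unfolding u_def using bt_ne bt_lt[of 0 n z] zn n4 by auto
  have gz: "g z = z"
  proof (rule ccontr)
    assume "g z \<noteq> z"
    hence "g = restrict (\<lambda>_. g z) Q" using Tm_const[OF gT] by blast
    hence "g u = g z" using uU by (metis DiffD1 restrict_apply')
    hence "compose Q f g u = z" using ce uU xz by auto
    thus False using step.prems(2) uU by blast
  qed
  hence fz: "f z = z" using xz by simp
  have gU: "g ` (Q - {z}) \<subseteq> Q - {z}"
  proof
    fix v assume "v \<in> g ` (Q - {z})"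
    then obtain w where w: "w \<in> Q - {z}" "v = g w" by blast
    have "v \<in> Q" using gP w by auto
    moreover have "v \<noteq> z"
    proof
      assume "v = z"
      hence "compose Q f g w = z" using ce w fz by auto
      thus False using step.prems(2) w by blast
    qed
    ultimately show "v \<in> Q - {z}" by simp
  qed
  show ?case
  proof (cases "inj_on g Q")
    case False
    thus ?thesis using step.IH(2) gz gU by blast
  next
    case True
    have ig: "inj_on g (Q - {z})" using True by (rule inj_on_subset) auto
    have "card (g ` (Q - {z})) = card (Q - {z})" using ig by (rule card_image)
    hence gU2: "g ` (Q - {z}) = Q - {z}" using card_subset_eq[OF _ gU] by simp
    have fU: "f ` (Q - {z}) \<subseteq> Q - {z}"
    proof
      fix v assume "v \<in> f ` (Q - {z})"
      then obtain w where w: "w \<in> Q - {z}" "v = f w" by blast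
      then obtain w' where w': "w' \<in> Q - {z}" "w = g w'" using gU2 by blast
      have "v = compose Q f g w'" using ce w w' by auto
      thus "v \<in> Q - {z}" using step.prems(2) w' by blast
    qed
    have "\<not> inj_on f Q"
    proof
      assume "inj_on f Q"
      hence "inj_on (compose Q f g) Q" using True gP
        by (auto simp: inj_on_def compose_eq PiE_def Pi_def)
      thus False using step.prems(3) by simp
    qed
    thus ?thesis using step.IH(1) fz fU by blast
  qed
qed

lemma K4_gen:
  assumes G: "G \<subseteq> Tm n z" and x: "x \<in> sg_gen Q G"
    and p: "x z = z" "\<exists>u\<in>Q - {z}. x u = z"
  shows "\<exists>g\<in>G. g z = z \<and> (\<exists>u\<in>Q - {z}. g u = z)"
  using x p
proof (induction rule: sg_gen.induct)
  case (base g) thus ?case by blast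
next
  case (step f g)
  have fT: "f \<in> Tm n z" and gT: "g \<in> Tm n z" using sg_Tm[OF G] step.hyps by auto
  have fP: "f \<in> Q \<rightarrow>\<^sub>E Q" and gP: "g \<in> Q \<rightarrow>\<^sub>E Q" using Tm_Pi fT gT by auto
  have ce: "\<And>y. y \<in> Q \<Longrightarrow> compose Q f g y = f (g y)" by (simp add: compose_eq)
  have zQ: "z \<in> Q" using zn by simp
  have xz: "f (g z) = z" using step.prems(1) ce[OF zQ] by simp
  show ?case
  proof (cases "g z = z")
    case False
    hence gc: "g z \<in> Q - {z}" using Tm_const[OF gT] by blast
    have "f z = z"
    proof (rule ccontr)
      assume "f z \<noteq> z"
      hence "f = restrict (\<lambda>_. f z) Q" using Tm_const[OF fT] by blast
      hence "f (g z) = f z" using gc by (metis DiffD1 restrict_apply')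
      thus False using xz \<open>f z \<noteq> z\<close> by simp
    qed
    thus ?thesis using step.IH(1) gc xz by blast
  next
    case True
    hence fz: "f z = z" using xz by simp
    obtain u where u: "u \<in> Q - {z}" "compose Q f g u = z" using step.prems(2) by blast
    show ?thesis
    proof (cases "g u = z")
      case True thus ?thesis using step.IH(2) u(1) \<open>g z = z\<close> by blast
    next
      case False
      have "g u \<in> Q" using gP u(1) by auto
      hence "g u \<in> Q - {z}" using False by simp
      moreover have "f (g u) = z" using u ce by auto
      ultimately show ?thesis using step.IH(1) fz by blast
    qed
  qed
qed

lemma K5_gen:
  assumes G: "G \<subseteq> Tm n z" and x: "x \<in> sg_gen Q G" and p: "x z \<noteq> z"
  shows "\<exists>g\<in>G. g z \<noteq> z"
  using x p
proof (induction rule: sg_gen.induct)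
  case (base g) thus ?case by blast
next
  case (step f g)
  have zQ: "z \<in> Q" using zn by simp
  have "f (g z) \<noteq> z" using step.prems compose_eq[OF zQ] by metis
  thus ?case using step.IH by metis
qed


lemma rank_lower:
  assumes G: "G \<subseteq> Tm n z" and fin: "finite G" and gen: "sg_gen Q G = Tm n z"
  shows "5 \<le> card G"
proof -
  define u1 where "u1 = bt z 0"
  define u2 where "u2 = bt z 1"
  define u3 where "u3 = bt z 2"
  have u1: "u1 \<in> Q - {z}" unfolding u1_def using bt_ne bt_lt[of 0 n z] zn n4 by auto
  have u2: "u2 \<in> Q - {z}" unfolding u2_def using bt_ne bt_lt[of 1 n z] zn n4 by auto
  have u3: "u3 \<in> Q - {z}" unfolding u3_def using bt_ne bt_lt[of 2 n z] zn n4 by auto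
  have d12: "u1 \<noteq> u2" and d23: "u2 \<noteq> u3" and d13: "u1 \<noteq> u3"
    unfolding u1_def u2_def u3_def by (auto simp: bt_inj)
  have zQ: "z \<in> Q" using zn by simp
  define B where "B = {g\<in>G. bij_betw g Q Q}"
  define t1 where "t1 = restrict (Transposition.transpose u1 u2) Q"
  define t2 where "t2 = restrict (Transposition.transpose u2 u3) Q"
  have tT: "t1 \<in> Tm n z" "t2 \<in> Tm n z"
    unfolding t1_def t2_def Tm_def using u1 u2 u3 zQ
    by (auto simp: PiE_def Pi_def transpose_def)
  have tb: "bij_betw t1 Q Q" "bij_betw t2 Q Q"
    unfolding t1_def t2_def using u1 u2 u3
    by (auto intro!: bij_betw_transpose_iff simp: bij_betw_cong[of Q "restrict _ Q" "Transposition.transpose _ _"])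
  have tB: "t1 \<in> sg_gen Q B" "t2 \<in> sg_gen Q B"
    using perm_gen[OF G] tT tb gen unfolding B_def by auto
  have nc: "compose Q t1 t2 \<noteq> compose Q t2 t1"
  proof
    assume e: "compose Q t1 t2 = compose Q t2 t1"
    have "compose Q t1 t2 u1 = u2" using u1 u2 u3 d12 d13 d23 unfolding t1_def t2_def
      by (simp add: compose_eq transpose_def)
    moreover have "compose Q t2 t1 u1 = u3" using u1 u2 u3 d12 d13 d23 unfolding t1_def t2_def
      by (simp add: compose_eq transpose_def)
    ultimately show False using e d23 by simp
  qed
  have finB: "finite B" using fin B_def by simp
  have cB: "card B \<ge> 2"
  proof (rule ccontr)
    assume "\<not> card B \<ge> 2"
    hence "card B = 0 \<or> card B = 1" by auto
    thus False
    proof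
      assume "card B = 0"
      hence "B = {}" using finB by simp
      thus False using tB sg_empty by simp
    next
      assume "card B = 1"
      then obtain p where Bp: "B = {p}" using card_1_singletonE by blast
      have "p \<in> Tm n z" using Bp B_def G by auto
      hence "p \<in> Q \<rightarrow> Q" using Tm_Pi by auto
      thus False using sg_single_comm[of p t1 t2] tB Bp nc by simp
    qed
  qed
  define e3 where "e3 = restrict (\<lambda>x. if x = u1 then u2 else x) Q"
  have e3T: "e3 \<in> Tm n z" unfolding e3_def Tm_def using u1 u2 zQ by (auto simp: PiE_def Pi_def)
  have "e3 z = z" "e3 ` (Q - {z}) \<subseteq> Q - {z}" unfolding e3_def using u1 u2 zQ by auto
  moreover have "\<not> inj_on e3 Q"
  proof
    assume "inj_on e3 Q"
    moreover have "e3 u1 = e3 u2" unfolding e3_def using u1 u2 by simp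
    ultimately show False using u1 u2 d12 by (meson DiffD1 inj_onD)
  qed
  ultimately obtain g3 where g3: "g3 \<in> G" "g3 z = z" "g3 ` (Q - {z}) \<subseteq> Q - {z}" "\<not> inj_on g3 Q"
    using K3_gen[OF G] e3T gen by blast
  define e4 where "e4 = restrict (\<lambda>x. if x = u1 then z else x) Q"
  have e4T: "e4 \<in> Tm n z" unfolding e4_def Tm_def using u1 zQ by (auto simp: PiE_def Pi_def)
  have "e4 z = z" "\<exists>u\<in>Q - {z}. e4 u = z" unfolding e4_def using u1 zQ by auto
  then obtain g4 where g4: "g4 \<in> G" "g4 z = z" "\<exists>u\<in>Q - {z}. g4 u = z"
    using K4_gen[OF G] e4T gen by blast
  define e5 where "e5 = restrict (\<lambda>_. u1) Q"
  have e5T: "e5 \<in> Tm n z" unfolding e5_def Tm_def using u1 by auto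
  have "e5 z \<noteq> z" unfolding e5_def using u1 zQ by auto
  then obtain g5 where g5: "g5 \<in> G" "g5 z \<noteq> z" using K5_gen[OF G] e5T gen by blast
  have g3B: "g3 \<notin> B" using g3(4) unfolding B_def bij_betw_def by blast
  have g4B: "g4 \<notin> B"
  proof
    assume "g4 \<in> B"
    hence "inj_on g4 Q" unfolding B_def bij_betw_def by blast
    moreover obtain u where "u \<in> Q - {z}" "g4 u = z" using g4(3) by blast
    ultimately show False using g4(2) zQ by (metis DiffD1 DiffD2 inj_onD singletonI)
  qed
  have g5B: "g5 \<notin> B"
  proof
    assume "g5 \<in> B"
    hence "inj_on g5 Q" unfolding B_def bij_betw_def by blast
    moreover have "g5 = restrict (\<lambda>_. g5 z) Q" using Tm_const[of g5] g5 G by blast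
    hence "g5 u1 = g5 z" using u1 by (metis DiffD1 restrict_apply')
    ultimately show False using u1 zQ by (metis DiffD1 DiffD2 inj_onD singletonI)
  qed
  have g34: "g3 \<noteq> g4"
  proof
    assume "g3 = g4"
    then obtain u where "u \<in> Q - {z}" "g3 u = z" using g4(3) by blast
    thus False using g3(3) by blast
  qed
  have g35: "g3 \<noteq> g5" using g3(2) g5(2) by auto
  have g45: "g4 \<noteq> g5" using g4(2) g5(2) by auto
  have sub: "insert g3 (insert g4 (insert g5 B)) \<subseteq> G" using g3(1) g4(1) g5(1) B_def by auto
  have "card (insert g3 (insert g4 (insert g5 B))) = card B + 3"
    using finB g3B g4B g5B g34 g35 g45 by simp
  moreover have "card (insert g3 (insert g4 (insert g5 B))) \<le> card G" using sub fin by (rule card_mono[rotated])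
  ultimately show ?thesis using cB by simp
qed

end


context tmctx begin

abbreviation "U \<equiv> Q - {z}"
definition "mm = n - 1"
definition io :: "nat \<Rightarrow> nat" where "io x = (if x < z then x else x - 1)"
definition nx :: "nat \<Rightarrow> nat" where "nx x = (if x = z then z else bt z ((io x + 1) mod mm))"

lemma mm3: "mm \<ge> 3" using n4 mm_def by simp

lemma bt_U: "i < mm \<Longrightarrow> bt z i \<in> U"
  using bt_ne bt_lt zn mm_def by auto

lemma io_bt: "io (bt z i) = i" by (simp add: io_def bt_def)

lemma bt_io: "x \<in> U \<Longrightarrow> bt z (io x) = x \<and> io x < mm"
  using zn unfolding io_def bt_def mm_def by auto

lemma nx_z: "nx z = z" by (simp add: nx_def)

lemma nx_bt: "i < mm \<Longrightarrow> nx (bt z i) = bt z ((i+1) mod mm)"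
  by (simp add: nx_def bt_ne io_bt)

lemma nx_Q: "x \<in> Q \<Longrightarrow> nx x \<in> Q"
proof (cases "x = z")
  case True thus ?thesis using zn nx_z by simp
next
  case False
  assume "x \<in> Q"
  hence "x \<in> U" using False by simp
  hence "io x < mm" using bt_io by blast
  hence "(io x + 1) mod mm < mm" using mm3 by simp
  thus ?thesis using bt_U False unfolding nx_def by simp
qed

lemma nxpow_z: "(nx ^^ k) z = z"
  by (induction k) (auto simp: nx_z)

lemma nxpow_bt: "i < mm \<Longrightarrow> (nx ^^ k) (bt z i) = bt z ((i + k) mod mm)"
proof (induction k)
  case 0 thus ?case by simp
next
  case (Suc k)
  have "(nx ^^ Suc k) (bt z i) = nx (bt z ((i + k) mod mm))" using Suc by simp
  also have "\<dots> = bt z (((i + k) mod mm + 1) mod mm)" using mm3 by (intro nx_bt) simp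
  also have "((i + k) mod mm + 1) mod mm = (i + Suc k) mod mm" by (simp add: mod_Suc_eq)
  finally show ?case .
qed

lemma nxpow_Q: "x \<in> Q \<Longrightarrow> (nx ^^ k) x \<in> Q"
proof (induction k)
  case 0 thus ?case by simp
next
  case (Suc k) thus ?case using nx_Q[of "(nx ^^ k) x"] by simp
qed

lemma nxpow_mm: "x \<in> Q \<Longrightarrow> (nx ^^ mm) x = x"
proof (cases "x = z")
  case True thus ?thesis by (simp add: nxpow_z)
next
  case False
  assume "x \<in> Q"
  hence xU: "x \<in> U" using False by simp
  have "(nx ^^ mm) x = (nx ^^ mm) (bt z (io x))" using bt_io[OF xU] by simp
  also have "\<dots> = bt z ((io x + mm) mod mm)" using bt_io[OF xU] by (intro nxpow_bt) simp
  also have "\<dots> = x" using bt_io[OF xU] by simp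
  finally show ?thesis .
qed

lemma modsuc_inj:
  fixes a b M :: nat assumes "(a + 1) mod M = (b + 1) mod M" "a < M" "b < M"
  shows "a = b"
proof -
  have ea: "(a+1) mod M = (if a + 1 = M then 0 else a + 1)" using assms(2) by auto
  have eb: "(b+1) mod M = (if b + 1 = M then 0 else b + 1)" using assms(3) by auto
  show ?thesis using assms(1) ea eb by (auto split: if_splits)
qed

lemma nx_inj: "inj_on nx Q"
proof (rule inj_onI)
  fix x y assume x: "x \<in> Q" and y: "y \<in> Q" and e: "nx x = nx y"
  show "x = y"
  proof (cases "x = z")
    case True
    hence "nx y = z" using e nx_z by simp
    hence "y = z" unfolding nx_def using bt_ne by (auto split: if_splits)
    thus ?thesis using True by simp
  next
    case xz: False
    hence "y \<noteq> z" using e nx_z unfolding nx_def using bt_ne by (auto split: if_splits)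
    hence yU: "y \<in> U" and xU: "x \<in> U" using x y xz by auto
    have "bt z ((io x + 1) mod mm) = bt z ((io y + 1) mod mm)" using e xz \<open>y \<noteq> z\<close> unfolding nx_def by simp
    hence "(io x + 1) mod mm = (io y + 1) mod mm" by (simp add: bt_inj)
    moreover have "io x < mm" "io y < mm" using bt_io xU yU by auto
    ultimately have "io x = io y"
      by (rule modsuc_inj)
    thus ?thesis using bt_io[OF xU] bt_io[OF yU] by metis
  qed
qed


definition "b0 = bt z 0"
definition "b1 = bt z 1"
definition "cyc = restrict nx Q"
definition "tau = restrict (Transposition.transpose b0 b1) Q"
definition "eps = restrict (\<lambda>x. if x = b0 then b1 else x) Q"
definition "del = restrict (\<lambda>x. if x = b0 then z else x) Q"
definition "kap = restrict (\<lambda>_. b0) Q"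
definition "Gen = {cyc, tau, eps, del, kap}"
abbreviation "S \<equiv> sg_gen Q Gen"

lemma b01: "b0 \<in> U" "b1 \<in> U" "b0 \<noteq> b1"
  unfolding b0_def b1_def using bt_U mm3 by (auto simp: bt_inj)

lemma zQ: "z \<in> Q" using zn by simp

lemma compS: "f \<in> S \<Longrightarrow> g \<in> S \<Longrightarrow> compose Q f g \<in> S"
  by (rule sg_gen.step)

lemma genS: "cyc \<in> S" "tau \<in> S" "eps \<in> S" "del \<in> S" "kap \<in> S"
  unfolding Gen_def by (auto intro: sg_gen.base)

lemma powS: "restrict (nx ^^ Suc k) Q \<in> S"
proof (induction k)
  case 0
  have "nx ^^ Suc 0 = nx" by simp
  thus ?case using genS(1) unfolding cyc_def by metis
next
  case (Suc k)
  have eq: "restrict (nx ^^ Suc (Suc k)) Q = compose Q cyc (restrict (nx ^^ Suc k) Q)"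
  proof (rule ext)
    fix x show "restrict (nx ^^ Suc (Suc k)) Q x = compose Q cyc (restrict (nx ^^ Suc k) Q) x"
    proof (cases "x \<in> Q")
      case True
      have "(nx ^^ Suc k) x \<in> Q" using nxpow_Q[OF True] .
      thus ?thesis using True unfolding cyc_def by (simp add: compose_eq)
    next
      case False thus ?thesis by (simp add: compose_def)
    qed
  qed
  show ?case unfolding eq by (rule compS[OF genS(1) Suc])
qed

lemma idS: "restrict id Q \<in> S"
proof -
  have "mm = Suc (mm - 1)" using mm3 by simp
  hence "restrict (nx ^^ mm) Q \<in> S" using powS[of "mm - 1"] by simp
  moreover have "restrict (nx ^^ mm) Q = restrict id Q" using nxpow_mm by (auto simp: fun_eq_iff)
  ultimately show ?thesis by simp
qed

lemma adjS: "i + 1 < mm \<Longrightarrow> restrict (Transposition.transpose (bt z i) (bt z (i+1))) Q \<in> S"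
proof (induction i)
  case 0
  have "(0::nat) + 1 = 1" by simp
  thus ?case using genS(2) unfolding tau_def b0_def b1_def by metis
next
  case (Suc i)
  define P where "P = restrict (nx ^^ Suc (mm - 2)) Q"
  have PS: "P \<in> S" unfolding P_def by (rule powS)
  have "i + 1 < mm" using Suc.prems by simp
  note IH = Suc.IH[OF this]
  have e: "restrict (Transposition.transpose (bt z (Suc i)) (bt z (Suc i+1))) Q
      = compose Q cyc (compose Q (restrict (Transposition.transpose (bt z i) (bt z (i+1))) Q) P)"
  proof (rule ext)
    fix x
    show "restrict (Transposition.transpose (bt z (Suc i)) (bt z (Suc i+1))) Q x
      = compose Q cyc (compose Q (restrict (Transposition.transpose (bt z i) (bt z (i+1))) Q) P) x"
    proof (cases "x \<in> Q")
      case False thus ?thesis by (simp add: compose_def)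
    next
      case xQ: True
      define y where "y = (nx ^^ Suc (mm - 2)) x"
      have yQ: "y \<in> Q" unfolding y_def using nxpow_Q[OF xQ] .
      have "Suc (Suc (mm - 2)) = mm" using mm3 by simp
      hence nxy: "nx y = x" unfolding y_def using nxpow_mm[OF xQ] by (metis funpow.simps(2) o_apply)
      have Py: "P x = y" unfolding P_def y_def using xQ by simp
      define a where "a = bt z i"
      define b where "b = bt z (i+1)"
      have aQ: "a \<in> Q" and bQ: "b \<in> Q" unfolding a_def b_def using bt_U Suc.prems by auto
      have na: "nx a = bt z (Suc i)" unfolding a_def using nx_bt[of i] Suc.prems by simp
      have nb: "nx b = bt z (Suc i + 1)" unfolding b_def using nx_bt[of "i+1"] Suc.prems by simp
      have tQ: "Transposition.transpose a b y \<in> Q" using aQ bQ yQ by (auto simp: transpose_def)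
      have key: "nx (Transposition.transpose a b y) = Transposition.transpose (nx a) (nx b) (nx y)"
      proof -
        have "nx y = nx a \<longleftrightarrow> y = a" using nx_inj yQ aQ by (meson inj_onD)
        moreover have "nx y = nx b \<longleftrightarrow> y = b" using nx_inj yQ bQ by (meson inj_onD)
        ultimately show ?thesis by (auto simp: transpose_def)
      qed
      have "compose Q cyc (compose Q (restrict (Transposition.transpose a b) Q) P) x
          = nx (Transposition.transpose a b y)"
        using xQ yQ tQ Py unfolding cyc_def by (simp add: compose_eq)
      also have "\<dots> = Transposition.transpose (bt z (Suc i)) (bt z (Suc i+1)) x"
        using key na nb nxy by simp
      finally show ?thesis using xQ unfolding a_def b_def by simp
    qed
  qed
  show ?case unfolding e by (intro compS genS IH PS)
qed


lemma trS_idx: "i < j \<Longrightarrow> j < mm \<Longrightarrow> restrict (Transposition.transpose (bt z i) (bt z j)) Q \<in> S"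
proof (induction j)
  case 0 thus ?case by simp
next
  case (Suc j)
  show ?case
  proof (cases "i = j")
    case True
    have "i + 1 < mm" using Suc.prems True by simp
    from adjS[OF this] True show ?thesis by (metis Suc_eq_plus1)
  next
    case False
    hence ij: "i < j" using Suc.prems by simp
    have "j < mm" using Suc.prems by simp
    note IH = Suc.IH[OF ij this]
    have A: "restrict (Transposition.transpose (bt z j) (bt z (j+1))) Q \<in> S" using adjS[of j] Suc.prems by simp
    define a where "a = bt z (Suc j)"
    define b where "b = bt z j"
    define c where "c = bt z i"
    have ac: "a \<noteq> c" and bc: "b \<noteq> c" using ij unfolding a_def b_def c_def by (auto simp: bt_inj)
    have QQ: "\<And>x y. x \<in> Q \<Longrightarrow> y \<in> Q \<Longrightarrow> restrict (Transposition.transpose x y) Q \<in> Q \<rightarrow> Q"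
      by (auto simp: transpose_def)
    have aQ: "a \<in> Q" "b \<in> Q" "c \<in> Q" unfolding a_def b_def c_def using bt_U Suc.prems ij by auto
    have e: "restrict (Transposition.transpose c a) Q = compose Q (compose Q (restrict (Transposition.transpose b a) Q)
         (restrict (Transposition.transpose c b) Q)) (restrict (Transposition.transpose b a) Q)"
    proof (rule ext)
      fix x show "restrict (Transposition.transpose c a) Q x = compose Q (compose Q (restrict (Transposition.transpose b a) Q)
         (restrict (Transposition.transpose c b) Q)) (restrict (Transposition.transpose b a) Q) x"
      proof (cases "x \<in> Q")
        case False thus ?thesis by (simp add: compose_def)
      next
        case True
        have t1: "Transposition.transpose b a x \<in> Q" using True aQ by (auto simp: transpose_def)
        hence t2: "Transposition.transpose c b (Transposition.transpose b a x) \<in> Q" using aQ by (auto simp: transpose_def)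
        have "Transposition.transpose a b (Transposition.transpose b c (Transposition.transpose a b x)) = Transposition.transpose a c x"
          using ac bc by (rule transpose_triple)
        thus ?thesis using True t1 t2 by (simp add: compose_eq transpose_commute)
      qed
    qed
    have A': "restrict (Transposition.transpose b a) Q \<in> S" using A unfolding a_def b_def by simp
    have IH': "restrict (Transposition.transpose c b) Q \<in> S" using IH unfolding b_def c_def .
    have "restrict (Transposition.transpose c a) Q \<in> S" unfolding e by (intro compS A' IH')
    thus ?thesis unfolding a_def c_def .
  qed
qed

lemma trS: "a \<in> U \<Longrightarrow> b \<in> U \<Longrightarrow> restrict (Transposition.transpose a b) Q \<in> S"
proof -
  assume a: "a \<in> U" and b: "b \<in> U"
  show ?thesis
  proof (cases "io a = io b")
    case True
    hence "a = b" using bt_io a b by metis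
    thus ?thesis using idS by simp
  next
    case False
    have ea: "a = bt z (io a)" and eb: "b = bt z (io b)" using bt_io a b by auto
    have la: "io a < mm" and lb: "io b < mm" using bt_io a b by auto
    show ?thesis
    proof (cases "io a < io b")
      case True
      thus ?thesis using trS_idx[OF True lb] ea eb by metis
    next
      case False
      hence "io b < io a" using \<open>io a \<noteq> io b\<close> by simp
      hence "restrict (Transposition.transpose b a) Q \<in> S" using trS_idx[OF _ la] ea eb by metis
      thus ?thesis by (metis transpose_commute)
    qed
  qed
qed

lemma permS: assumes pp: "p permutes U" shows "restrict p Q \<in> S"
proof -
  have fin: "finite U" by simp
  show ?thesis
  proof (rule permutes_induct[OF pp fin])
    show "restrict id Q \<in> S" using idS .
  next
    fix a b q assume ab: "a \<in> U" "b \<in> U" and IH: "restrict q Q \<in> S" and qp: "q permutes U"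
    have pQ: "\<And>x. x \<in> Q \<Longrightarrow> q x \<in> Q"
    proof -
      fix x assume "x \<in> Q"
      show "q x \<in> Q"
      proof (cases "x \<in> U")
        case True thus ?thesis using permutes_in_image[OF qp, of x] by blast
      next
        case False thus ?thesis using permutes_not_in[OF qp False] \<open>x \<in> Q\<close> by simp
      qed
    qed
    have e: "restrict (Transposition.transpose a b \<circ> q) Q = compose Q (restrict (Transposition.transpose a b) Q) (restrict q Q)"
    proof (rule ext)
      fix x show "restrict (Transposition.transpose a b \<circ> q) Q x = compose Q (restrict (Transposition.transpose a b) Q) (restrict q Q) x"
        using pQ by (cases "x \<in> Q") (simp_all add: compose_def)
    qed
    show "restrict (Transposition.transpose a b \<circ> q) Q \<in> S" unfolding e by (intro compS trS ab IH)
  qed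
qed


lemma perm2S: "a \<in> U \<Longrightarrow> b \<in> U \<Longrightarrow> c \<in> U \<Longrightarrow> d \<in> U \<Longrightarrow>
    restrict (Transposition.transpose a b \<circ> Transposition.transpose c d) Q \<in> S"
  by (intro permS permutes_compose permutes_swap_id)

lemma elemZ: assumes a: "a \<in> U" shows "restrict (\<lambda>x. if x = a then z else x) Q \<in> S"
proof -
  define s where "s = restrict (Transposition.transpose b0 a) Q"
  have sS: "s \<in> S" unfolding s_def using trS b01 a by simp
  have e: "restrict (\<lambda>x. if x = a then z else x) Q = compose Q s (compose Q del s)"
  proof (rule ext)
    fix x show "restrict (\<lambda>x. if x = a then z else x) Q x = compose Q s (compose Q del s) x"
    proof (cases "x \<in> Q")
      case False thus ?thesis by (simp add: compose_def)
    next
      case True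
      have t1: "Transposition.transpose b0 a x \<in> Q" using True a b01 by (auto simp: transpose_def)
      have dz: "del (Transposition.transpose b0 a x) = (if x = a then z else Transposition.transpose b0 a x)"
        unfolding del_def using t1 a b01 by (auto simp: transpose_def)
      have "compose Q s (compose Q del s) x = s (del (Transposition.transpose b0 a x))"
        using True t1 unfolding s_def by (simp add: compose_eq)
      also have "\<dots> = (if x = a then z else x)"
      proof (cases "x = a")
        case True thus ?thesis using dz zQ a b01 unfolding s_def by (auto simp: transpose_def)
      next
        case False thus ?thesis using dz t1 unfolding s_def by simp
      qed
      finally show ?thesis using True by simp
    qed
  qed
  show ?thesis unfolding e by (intro compS sS genS)
qed

lemma elemU: assumes a: "a \<in> U" and b: "b \<in> U" and ab: "a \<noteq> b"
  shows "restrict (\<lambda>x. if x = a then b else x) Q \<in> S"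
proof -
  define c where "c = Transposition.transpose b0 a b"
  have cU: "c \<in> U" unfolding c_def using a b b01 by (auto simp: transpose_def)
  have cb0: "c \<noteq> b0" unfolding c_def using ab b01 by (auto simp: transpose_def)
  define r where "r = Transposition.transpose b0 a \<circ> Transposition.transpose b1 c"
  define r' where "r' = Transposition.transpose b1 c \<circ> Transposition.transpose b0 a"
  have rS: "restrict r Q \<in> S" unfolding r_def using perm2S b01 a cU by simp
  have r'S: "restrict r' Q \<in> S" unfolding r'_def using perm2S b01 a cU by simp
  have rr: "r (r' x) = x" for x unfolding r_def r'_def by simp
  have r'b0: "r' x = b0 \<longleftrightarrow> x = a" for x
    unfolding r'_def using cb0 b01 by (auto simp: transpose_def split: if_splits)
  have rb1: "r b1 = b" unfolding r_def c_def by simp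
  have rQ: "x \<in> Q \<Longrightarrow> r x \<in> Q" for x unfolding r_def using a cU b01 by (auto simp: transpose_def)
  have r'Q: "x \<in> Q \<Longrightarrow> r' x \<in> Q" for x unfolding r'_def using a cU b01 by (auto simp: transpose_def)
  have e: "restrict (\<lambda>x. if x = a then b else x) Q = compose Q (restrict r Q) (compose Q eps (restrict r' Q))"
  proof (rule ext)
    fix x show "restrict (\<lambda>x. if x = a then b else x) Q x = compose Q (restrict r Q) (compose Q eps (restrict r' Q)) x"
    proof (cases "x \<in> Q")
      case False thus ?thesis by (simp add: compose_def)
    next
      case True
      have y: "r' x \<in> Q" using r'Q True .
      have ey: "eps (r' x) = (if x = a then b1 else r' x)" unfolding eps_def using y r'b0 by simp
      have eQ: "eps (r' x) \<in> Q" using ey y b01 by auto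
      have "compose Q (restrict r Q) (compose Q eps (restrict r' Q)) x = r (eps (r' x))"
        using True y eQ by (simp add: compose_eq)
      also have "\<dots> = (if x = a then b else x)" using ey rr rb1 by simp
      finally show ?thesis using True by simp
    qed
  qed
  show ?thesis unfolding e by (intro compS rS r'S genS)
qed

lemma elemS: assumes "a \<in> U" "b \<in> Q" "a \<noteq> b" shows "restrict (\<lambda>x. if x = a then b else x) Q \<in> S"
  using assms elemZ elemU by (cases "b = z") auto

lemma constS: assumes c: "c \<in> U" shows "restrict (\<lambda>_. c) Q \<in> S"
proof -
  define s where "s = restrict (Transposition.transpose b0 c) Q"
  have sS: "s \<in> S" unfolding s_def using trS b01 c by simp
  have e: "restrict (\<lambda>_. c) Q = compose Q s kap"
  proof (rule ext)
    fix x show "restrict (\<lambda>_. c) Q x = compose Q s kap x"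
      using b01 unfolding s_def kap_def by (cases "x \<in> Q") (simp_all add: compose_def)
  qed
  show ?thesis unfolding e by (intro compS sS genS)
qed


lemma fixS: "f \<in> Q \<rightarrow>\<^sub>E Q \<Longrightarrow> f z = z \<Longrightarrow> f \<in> S"
proof (induction "card Q - card (f ` Q)" arbitrary: f rule: less_induct)
  case less
  note fP = less.prems(1) and fz = less.prems(2)
  have fQ: "f ` Q \<subseteq> Q" using fP by auto
  show ?case
  proof (cases "inj_on f Q")
    case True
    have fQ2: "f ` Q = Q" using card_subset_eq[OF _ fQ] card_image[OF True] by simp
    define p where "p = (\<lambda>x. if x \<in> U then f x else x)"
    have fU: "f ` U = U"
    proof -
      have "f ` U = f ` Q - f ` {z}" using True zQ by (simp add: inj_on_image_set_diff)
      thus ?thesis using fQ2 fz by simp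
    qed
    have "bij_betw p U U"
    proof -
      have "bij_betw f U U" using fU inj_on_subset[OF True] by (auto simp: bij_betw_def)
      moreover have "bij_betw p U U = bij_betw f U U" by (rule bij_betw_cong) (simp add: p_def)
      ultimately show ?thesis by simp
    qed
    hence pp: "p permutes U" by (rule bij_imp_permutes) (auto simp: p_def)
    have "restrict p Q = f"
    proof (rule ext)
      fix x show "restrict p Q x = f x"
        using fP fz unfolding p_def by (cases "x \<in> Q") (auto simp: PiE_def extensional_def)
    qed
    thus ?thesis using permS[OF pp] by simp
  next
    case False
    then obtain x y where xy: "x \<in> Q" "y \<in> Q" "x \<noteq> y" "f x = f y" unfolding inj_on_def by blast
    obtain a a' where aa: "a \<in> U" "a' \<in> Q" "a \<noteq> a'" "f a = f a'"
    proof (cases "x = z")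
      case True thus ?thesis using that[of y x] xy by auto
    next
      case False thus ?thesis using that[of x y] xy by auto
    qed
    have "f ` Q \<noteq> Q"
    proof
      assume "f ` Q = Q"
      hence "inj_on f Q" by (simp add: eq_card_imp_inj_on)
      thus False using False by simp
    qed
    then obtain w where w: "w \<in> Q" "w \<notin> f ` Q" using fQ by blast
    have wz: "w \<noteq> z" using w fz zQ by (metis image_eqI)
    define g where "g = restrict (\<lambda>x. if x = a then w else f x) Q"
    have gP: "g \<in> Q \<rightarrow>\<^sub>E Q" unfolding g_def using w fP by auto
    have gz: "g z = z" unfolding g_def using aa(1) fz zQ by auto
    have gimg: "g ` Q = insert w (f ` Q)"
    proof
      show "g ` Q \<subseteq> insert w (f ` Q)" unfolding g_def by auto
      show "insert w (f ` Q) \<subseteq> g ` Q"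
      proof
        fix v assume "v \<in> insert w (f ` Q)"
        then consider "v = w" | u where "u \<in> Q" "v = f u" by blast
        thus "v \<in> g ` Q"
        proof cases
          case 1 thus ?thesis unfolding g_def using aa(1) by (auto intro!: image_eqI[of _ _ a])
        next
          case (2 u)
          show ?thesis
          proof (cases "u = a")
            case True
            hence "v = g a'" unfolding g_def using 2 aa by auto
            thus ?thesis using aa(2) by blast
          next
            case False
            hence "v = g u" unfolding g_def using 2 by auto
            thus ?thesis using 2(1) by blast
          qed
        qed
      qed
    qed
    have cl: "card (f ` Q) < card Q" using card_mono[OF _ fQ] \<open>f ` Q \<noteq> Q\<close> fQ
      by (meson finite_lessThan psubsetI psubset_card_mono)
    have "card (g ` Q) = Suc (card (f ` Q))" using gimg w(2) by simp
    hence "card Q - card (g ` Q) < card Q - card (f ` Q)" using cl by simp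
    hence gS: "g \<in> S" using less.hyps gP gz by blast
    have eS: "restrict (\<lambda>x. if x = w then f a else x) Q \<in> S"
    proof (rule elemS)
      show "w \<in> U" using w wz by simp
      show "f a \<in> Q" using fP aa(1) by auto
      show "w \<noteq> f a" using w aa(1) by auto
    qed
    have e: "f = compose Q (restrict (\<lambda>x. if x = w then f a else x) Q) g"
    proof (rule ext)
      fix x show "f x = compose Q (restrict (\<lambda>x. if x = w then f a else x) Q) g x"
      proof (cases "x \<in> Q")
        case False thus ?thesis using fP by (auto simp: compose_def PiE_def extensional_def)
      next
        case True
        have gx: "g x \<in> Q" using gP True by auto
        have "compose Q (restrict (\<lambda>x. if x = w then f a else x) Q) g x = (if g x = w then f a else g x)"
          using True gx by (simp add: compose_eq)
        also have "\<dots> = f x"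
        proof (cases "x = a")
          case True thus ?thesis unfolding g_def using aa(1) by simp
        next
          case False
          hence "g x = f x" unfolding g_def using \<open>x \<in> Q\<close> by simp
          moreover have "f x \<noteq> w" using w True by blast
          ultimately show ?thesis by simp
        qed
        finally show ?thesis by simp
      qed
    qed
    show ?thesis by (subst e) (intro compS eS gS)
  qed
qed

lemma Gen_Tm: "Gen \<subseteq> Tm n z"
proof -
  have "cyc \<in> Tm n z" unfolding cyc_def Tm_def using nx_Q nx_z zQ by auto
  moreover have "tau \<in> Tm n z" unfolding tau_def Tm_def using b01 zQ by (auto simp: transpose_def)
  moreover have "eps \<in> Tm n z" unfolding eps_def Tm_def using b01 zQ by auto
  moreover have "del \<in> Tm n z" unfolding del_def Tm_def using b01 zQ by auto
  moreover have "kap \<in> Tm n z" unfolding kap_def Tm_def using b01 by auto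
  ultimately show ?thesis unfolding Gen_def by blast
qed

lemma S_eq: "S = Tm n z"
proof
  show "S \<subseteq> Tm n z" using sg_Tm[OF Gen_Tm] by blast
  show "Tm n z \<subseteq> S"
  proof
    fix f assume "f \<in> Tm n z"
    thus "f \<in> S" unfolding Tm_def using fixS constS by auto
  qed
qed

lemma card_Gen: "card Gen = 5"
proof -
  define b2 where "b2 = bt z 2"
  have b2: "b2 \<in> U" "b2 \<noteq> b0" "b2 \<noteq> b1" unfolding b2_def b0_def b1_def using bt_U mm3 by (auto simp: bt_inj)
  have v1: "cyc z = z" "tau z = z" "eps z = z" "del z = z" "kap z = b0"
    unfolding cyc_def tau_def eps_def del_def kap_def using zQ nx_z b01 by (auto simp: transpose_def)
  have v2: "del b0 = z" "eps b0 = b1" "tau b0 = b1" "cyc b0 = b1"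
    unfolding cyc_def tau_def eps_def del_def b0_def b1_def using bt_U mm3 nx_bt[of 0] by (auto simp: transpose_def)
  have v3: "eps b1 = b1" "tau b1 = b0" unfolding tau_def eps_def using b01 by (auto simp: transpose_def)
  have v4a: "tau b2 = b2" unfolding tau_def using b2 b01 by (auto simp: transpose_def)
  have n2: "nx b2 = bt z (3 mod mm)" unfolding b2_def using nx_bt[of 2] mm3 by simp
  have "3 mod mm \<noteq> 2"
  proof (cases "mm = 3")
    case True thus ?thesis by simp
  next
    case False hence "mm > 3" using mm3 by simp
    thus ?thesis by simp
  qed
  hence "nx b2 \<noteq> b2" using n2 unfolding b2_def by (simp add: bt_inj)
  hence v4: "tau b2 = b2" "cyc b2 \<noteq> b2" using v4a b2 unfolding cyc_def by auto
  have ct: "cyc \<noteq> tau" using v4 by metis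
  have v5: "cyc b1 = b2" unfolding cyc_def b1_def b2_def using bt_U mm3 nx_bt[of 1] by (auto simp: numeral_2_eq_2)
  have zb0: "z \<noteq> b0" using b01 by auto
  have zb1: "z \<noteq> b1" using b01 by auto
  have "cyc \<noteq> eps" using v5 v3 b2 by metis
  moreover have "cyc \<noteq> del" using v2 zb1 by metis
  moreover have "cyc \<noteq> kap" using v1 zb0 by metis
  moreover have "tau \<noteq> eps" using v3 b01 by metis
  moreover have "tau \<noteq> del" using v2 zb1 by metis
  moreover have "tau \<noteq> kap" using v1 zb0 by metis
  moreover have "eps \<noteq> del" using v2 zb1 by metis
  moreover have "eps \<noteq> kap" using v1 zb0 by metis
  moreover have "del \<noteq> kap" using v1 zb0 by metis
  ultimately show ?thesis unfolding Gen_def using ct by simp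
qed

end


theorem proposition4:
  fixes n :: nat and Sig :: "'a set" and delta :: "nat \<Rightarrow> 'a \<Rightarrow> nat"
    and q0 :: nat and F :: "nat set"
  assumes "n \<ge> 4"
    and "minimal_dfa n Sig delta q0 F"
    and "left_ideal Sig (dfa_lang Sig delta q0 F)"
    and "card (trans_sg n Sig delta) = n ^ (n - 1) + n - 1"
  shows "sg_rank {..<n} (trans_sg n Sig delta) = 5"
proof -
  have T: "trans_sg n Sig delta = Tm n q0" by (rule T_char[OF assms])
  have z: "q0 < n" using assms(2) unfolding minimal_dfa_def dfa_def by blast
  interpret tmctx n q0 using assms(1) z by unfold_locales
  show ?thesis unfolding sg_rank_def T
  proof (rule Least_equality)
    show "\<exists>G. G \<subseteq> Tm n q0 \<and> finite G \<and> card G = 5 \<and> sg_gen {..<n} G = Tm n q0"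
      using Gen_Tm card_Gen S_eq by (intro exI[of _ Gen]) (auto simp: Gen_def)
  next
    fix k assume "\<exists>G. G \<subseteq> Tm n q0 \<and> finite G \<and> card G = k \<and> sg_gen {..<n} G = Tm n q0"
    then obtain G where G: "G \<subseteq> Tm n q0" "finite G" "card G = k" "sg_gen {..<n} G = Tm n q0" by blast
    show "5 \<le> k" using rank_lower[OF G(1) G(2) G(4)] G(3) by simp
  qed
qed


end
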